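(* Let $m,r$ be positive integers, let $W\in\mathbb{R}^{m\times m}$ be a fixed real symmetric matrix, and define $f:\mathbb{R}^{m\times r}\to\mathbb{R}$ by $f(U)=F(W,U):=\frac{1}{2}\|W-UU^{T}\|_{F}^{2}$. Let $\psi:\mathbb{R}^{m\times r}\rightarrow\mathbb{R}$ be the kernel \[ \psi(U):= \frac{3}{2}\|U\|_{F}^{4}+\|W\|_{F}\|U\|_{F}^{2}. \] Then for every $L\ge 1$, the pair $(f,\psi)$ is $L$-smooth adaptable on $\mathbb{R}^{m\times r}$, i.e. \[ |f(X)-f(Y)-\langle\nabla f(Y),X-Y\rangle|\le L\, D_{\psi}(X,Y)\quad \text{for all } X,Y\in\mathbb{R}^{m\times r}. \]
   Context: $\|\cdot\|_F$ is the Frobenius norm and $\langle Y_1,Y_2\rangle:=\mathrm{tr}(Y_1^{T}Y_2)$. For a differentiable function $\psi$, the Bregman distance is $D_{\psi}(X,Y):=\psi(X)-\psi(Y)-\langle\nabla\psi(Y),X-Y\rangle$. A pair $(f,\psi)$ is called $L$-smooth adaptable ($L$-smad) on a set $C$ if there is $L>0$ with $|f(x)-f(y)-\langle\nabla f(y),x-y\rangle|\le L D_{\psi}(x,y)$ for all $x,y\in C$. In the paper, $W$ is the current iterate $W^{k+1}$ of an alternating algorithm, which is symmetric. *)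

theory Defs
  imports "HOL-Analysis.Analysis"
begin

text \<open>Matrices in R^(m x r) are modelled as real^'r^'m. The library norm on this
type is the Frobenius norm and the library inner product is tr(Y1^T Y2).\<close>

definition grad :: "('a::real_inner \<Rightarrow> real) \<Rightarrow> 'a \<Rightarrow> 'a" where
  "grad f x = (SOME g. (f has_derivative (\<lambda>h. inner g h)) (at x))"

definition bregman :: "('a::real_inner \<Rightarrow> real) \<Rightarrow> 'a \<Rightarrow> 'a \<Rightarrow> real" where
  "bregman psi x y = psi x - psi y - inner (grad psi y) (x - y)"

definition L_smad :: "('a::real_inner \<Rightarrow> real) \<Rightarrow> ('a \<Rightarrow> real) \<Rightarrow> real \<Rightarrow> 'a set \<Rightarrow> bool" where
  "L_smad f psi L C \<longleftrightarrow> L > 0 \<and>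
     (\<forall>x\<in>C. \<forall>y\<in>C. \<bar>f x - f y - inner (grad f y) (x - y)\<bar> \<le> L * bregman psi x y)"

end

theory Submission imports Defs begin

lemma tr_add: "transpose (A + B) = transpose A + transpose (B::real^'n^'m)"
  by (simp add: transpose_def vec_eq_iff)

lemma mm_rdistrib: "((A::real^'n^'m) + B) ** (C::real^'p^'n) = A ** C + B ** C"
  by (simp add: matrix_matrix_mult_def vec_eq_iff sum.distrib algebra_simps)

lemma mm_ldistrib: "(A::real^'n^'m) ** ((B::real^'p^'n) + C) = A ** B + A ** C"
  by (simp add: matrix_matrix_mult_def vec_eq_iff sum.distrib algebra_simps)

lemma mm_scaleR_l: "(k *\<^sub>R (A::real^'n^'m)) ** (B::real^'p^'n) = k *\<^sub>R (A ** B)"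
  by (simp add: matrix_matrix_mult_def vec_eq_iff sum_distrib_left algebra_simps)

lemma mm_scaleR_r: "(A::real^'n^'m) ** (k *\<^sub>R (B::real^'p^'n)) = k *\<^sub>R (A ** B)"
  by (simp add: matrix_matrix_mult_def vec_eq_iff sum_distrib_left algebra_simps)

lemma tr_scaleR: "transpose (k *\<^sub>R (A::real^'n^'m)) = k *\<^sub>R transpose A"
  by (simp add: transpose_def vec_eq_iff)

lemma inner_mat: "inner (A::real^'n^'m) B = (\<Sum>i\<in>UNIV. \<Sum>j\<in>UNIV. A$i$j * B$i$j)"
  by (simp add: inner_vec_def)

lemma inner_transpose: "inner (transpose A) (transpose B) = inner (A::real^'n^'m) B"
proof -
  have "inner (transpose A) (transpose B) = (\<Sum>i\<in>UNIV. \<Sum>j\<in>UNIV. A$j$i * B$j$i)"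
    by (simp add: inner_mat transpose_def)
  also have "\<dots> = (\<Sum>j\<in>UNIV. \<Sum>i\<in>UNIV. A$j$i * B$j$i)" by (rule sum.swap)
  also have "\<dots> = inner A B" by (simp add: inner_mat)
  finally show ?thesis .
qed

lemma norm_transpose: "norm (transpose A) = norm (A::real^'n^'m)"
  by (simp add: norm_eq_sqrt_inner inner_transpose)

lemma inner_mm_left:
  "inner ((M::real^'n^'m) ** (N::real^'p^'n)) P = inner M (P ** transpose N)"
proof -
  have "inner (M ** N) P = (\<Sum>i\<in>UNIV. \<Sum>j\<in>UNIV. (\<Sum>k\<in>UNIV. M$i$k * N$k$j) * P$i$j)"
    by (simp add: inner_mat matrix_matrix_mult_def)
  also have "\<dots> = (\<Sum>i\<in>UNIV. \<Sum>j\<in>UNIV. \<Sum>k\<in>UNIV. M$i$k * N$k$j * P$i$j)"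
    by (simp add: sum_distrib_right)
  also have "\<dots> = (\<Sum>i\<in>UNIV. \<Sum>k\<in>UNIV. \<Sum>j\<in>UNIV. M$i$k * N$k$j * P$i$j)"
    by (rule sum.cong[OF refl], rule sum.swap)
  also have "\<dots> = (\<Sum>i\<in>UNIV. \<Sum>k\<in>UNIV. M$i$k * (\<Sum>j\<in>UNIV. P$i$j * N$k$j))"
    by (simp add: sum_distrib_left mult_ac)
  also have "\<dots> = inner M (P ** transpose N)"
    by (simp add: inner_mat matrix_matrix_mult_def transpose_def)
  finally show ?thesis .
qed

lemma inner_mm_right:
  "inner ((M::real^'n^'m) ** (N::real^'p^'n)) P = inner N (transpose M ** P)"
proof -
  have "inner (M ** N) P = inner (transpose N ** transpose M) (transpose P)"
    by (metis inner_transpose matrix_transpose_mul)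
  also have "\<dots> = inner (transpose N) (transpose P ** M)"
    by (simp add: inner_mm_left)
  also have "\<dots> = inner N (transpose M ** P)"
    by (metis inner_transpose matrix_transpose_mul transpose_transpose)
  finally show ?thesis .
qed

lemma norm_mult_le: "norm ((M::real^'n^'m) ** (N::real^'p^'n)) \<le> norm M * norm N"
proof -
  define v where "v j = (\<chi> k. N$k$j)" for j
  have e: "(M ** N)$i$j = inner (M$i) (v j)" for i j
    unfolding matrix_matrix_mult_def v_def inner_vec_def by simp
  have 1: "inner (M ** N) (M ** N) = (\<Sum>i\<in>UNIV. \<Sum>j\<in>UNIV. inner (M$i) (v j) * inner (M$i) (v j))"
    unfolding inner_mat e by (rule refl)
  have 2: "inner (M$i) (v j) * inner (M$i) (v j) \<le> inner (M$i) (M$i) * inner (v j) (v j)" for i j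
  proof -
    have cs: "\<bar>inner (M$i) (v j)\<bar> \<le> norm (M$i) * norm (v j)" by (rule Cauchy_Schwarz_ineq2)
    have nx: "norm x * norm x = inner x x" for x :: "real^'n"
      by (metis power2_eq_square power2_norm_eq_inner)
    have "inner (M$i) (v j) * inner (M$i) (v j) = \<bar>inner (M$i) (v j)\<bar> * \<bar>inner (M$i) (v j)\<bar>"
      by (rule abs_mult_self_eq[symmetric])
    also have "\<dots> \<le> (norm (M$i) * norm (v j)) * (norm (M$i) * norm (v j))"
      using mult_mono[OF cs cs] by simp
    also have "\<dots> = (norm (M$i) * norm (M$i)) * (norm (v j) * norm (v j))"
      by (simp add: mult_ac)
    also have "\<dots> = inner (M$i) (M$i) * inner (v j) (v j)"
      by (simp only: nx)
    finally show ?thesis .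
  qed
  have 3: "(\<Sum>i\<in>UNIV. \<Sum>j\<in>UNIV. inner (M$i) (v j) * inner (M$i) (v j))
      \<le> (\<Sum>i\<in>UNIV. \<Sum>j\<in>UNIV. inner (M$i) (M$i) * inner (v j) (v j))"
    by (intro sum_mono 2)
  have 4: "(\<Sum>i\<in>UNIV. \<Sum>j\<in>UNIV. inner (M$i) (M$i) * inner (v j) (v j))
      = (\<Sum>i\<in>UNIV. inner (M$i) (M$i)) * (\<Sum>j\<in>UNIV. inner (v j) (v j))"
    by (rule sum_product[symmetric])
  have 5: "(\<Sum>i\<in>UNIV. inner (M$i) (M$i)) = inner M M" by (rule inner_vec_def[symmetric])
  have 6: "(\<Sum>j\<in>UNIV. inner (v j) (v j)) = inner N N"
  proof -
    have "(\<Sum>j\<in>UNIV. inner (v j) (v j)) = (\<Sum>j\<in>UNIV. \<Sum>k\<in>UNIV. N$k$j * N$k$j)"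
      unfolding v_def inner_vec_def by simp
    also have "\<dots> = (\<Sum>k\<in>UNIV. \<Sum>j\<in>UNIV. N$k$j * N$k$j)" by (rule sum.swap)
    also have "\<dots> = inner N N" by (simp add: inner_mat)
    finally show ?thesis .
  qed
  have "inner (M ** N) (M ** N) \<le> inner M M * inner N N"
    using 1 3 4 5 6 by simp
  hence "(norm (M ** N))^2 \<le> (norm M * norm N)^2"
    by (simp add: power_mult_distrib power2_norm_eq_inner)
  thus ?thesis by (rule power2_le_imp_le) simp
qed

lemma has_derivative_quad:
  fixes \<phi> :: "'a::real_normed_vector \<Rightarrow> real"
  assumes bl: "bounded_linear L"
    and b: "\<And>h. norm h \<le> 1 \<Longrightarrow> \<bar>\<phi> (x + h) - \<phi> x - L h\<bar> \<le> K * (norm h)^2"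
  shows "(\<phi> has_derivative L) (at x)"
  unfolding has_derivative_at_alt
proof (intro conjI bl allI impI)
  fix e :: real assume e: "e > 0"
  define d where "d = min 1 (e / (\<bar>K\<bar> + 1))"
  have d: "d > 0" using e by (simp add: d_def)
  show "\<exists>d>0. \<forall>y. norm (y - x) < d \<longrightarrow> norm (\<phi> y - \<phi> x - L (y - x)) \<le> e * norm (y - x)"
  proof (intro exI[of _ d] conjI d allI impI)
    fix y assume y: "norm (y - x) < d"
    define n where "n = norm (y - x)"
    have n0: "n \<ge> 0" by (simp add: n_def)
    have n1: "n \<le> 1" using y by (simp add: n_def d_def)
    have "n < e / (\<bar>K\<bar> + 1)" using y by (simp add: n_def d_def)
    hence ne: "n * (\<bar>K\<bar> + 1) \<le> e"
      using pos_less_divide_eq[of "\<bar>K\<bar> + 1" n e] by simp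
    have "\<bar>\<phi> (x + (y - x)) - \<phi> x - L (y - x)\<bar> \<le> K * n^2" using b[of "y - x"] n1 by (simp add: n_def)
    also have "\<dots> \<le> (\<bar>K\<bar> + 1) * n * n"
      using mult_right_mono[of K "\<bar>K\<bar> + 1" "n * n"] n0 by (simp add: power2_eq_square mult.assoc)
    also have "\<dots> \<le> e * n" using mult_right_mono[OF ne n0] by (simp add: mult_ac)
    finally show "norm (\<phi> y - \<phi> x - L (y - x)) \<le> e * norm (y - x)" by (simp add: n_def)
  qed
qed

lemma grad_eq:
  fixes f :: "'a::real_inner \<Rightarrow> real"
  assumes "(f has_derivative (\<lambda>h. inner g h)) (at x)"
  shows "grad f x = g"
proof -
  have "\<exists>g. (f has_derivative (\<lambda>h. inner g h)) (at x)" using assms by blast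
  hence "(f has_derivative (\<lambda>h. inner (grad f x) h)) (at x)"
    unfolding grad_def by (rule someI_ex)
  hence "(\<lambda>h. inner (grad f x) h) = (\<lambda>h. inner g h)"
    by (rule has_derivative_unique[OF _ assms])
  hence eq: "inner (grad f x) h = inner g h" for h by (rule fun_cong)
  have "inner (grad f x - g) (grad f x - g) = 0"
    by (simp only: inner_diff_left eq diff_self)
  thus ?thesis by simp
qed


lemma keyK:
  fixes Z H :: "real^'r^'m"
  shows "inner (Z ** transpose H + H ** transpose Z) (Z ** transpose H + H ** transpose Z)
          + 2 * inner (Z ** transpose Z) (H ** transpose H) \<le> 6 * inner Z Z * inner H H"
proof -
  have n1: "norm (Z ** transpose H + H ** transpose Z) \<le> 2 * (norm Z * norm H)"
  proof -
    have "norm (Z ** transpose H + H ** transpose Z) \<le> norm (Z ** transpose H) + norm (H ** transpose Z)"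
      by (rule norm_triangle_ineq)
    also have "\<dots> \<le> norm Z * norm H + norm Z * norm H"
    proof -
      have h1: "norm (Z ** transpose H) \<le> norm Z * norm H"
        using norm_mult_le[of Z "transpose H"] by (simp add: norm_transpose)
      have h2: "norm (H ** transpose Z) \<le> norm Z * norm H"
        using norm_mult_le[of H "transpose Z"] by (simp add: norm_transpose mult.commute)
      show ?thesis using h1 h2 by linarith
    qed
    finally show ?thesis by linarith
  qed
  have "inner (Z ** transpose H + H ** transpose Z) (Z ** transpose H + H ** transpose Z)
        = (norm (Z ** transpose H + H ** transpose Z))^2" by (simp add: power2_norm_eq_inner)
  also have "\<dots> \<le> (2 * (norm Z * norm H))^2"
    by (rule power_mono[OF n1 norm_ge_zero])
  finally have i1: "inner (Z ** transpose H + H ** transpose Z) (Z ** transpose H + H ** transpose Z)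
        \<le> 4 * ((norm Z)^2 * (norm H)^2)" by (simp add: power_mult_distrib)
  have "inner (Z ** transpose Z) (H ** transpose H) \<le> norm (Z ** transpose Z) * norm (H ** transpose H)"
    by (rule norm_cauchy_schwarz)
  also have "\<dots> \<le> (norm Z * norm Z) * (norm H * norm H)"
    using norm_mult_le[of Z "transpose Z"] norm_mult_le[of H "transpose H"]
    by (simp add: norm_transpose mult_mono')
  finally have i2: "inner (Z ** transpose Z) (H ** transpose H) \<le> (norm Z)^2 * (norm H)^2"
    by (simp add: power2_eq_square)
  show ?thesis using i1 i2 by (simp add: power2_norm_eq_inner)
qed

lemma aq_nonneg:
  fixes Y H :: "real^'r^'m"
  shows "inner (Y ** transpose Y) (H ** transpose H) \<ge> 0"
proof -
  have "inner (Y ** transpose Y) (H ** transpose H) = inner Y (H ** (transpose H ** Y))"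
    by (simp add: inner_mm_left matrix_mul_assoc)
  also have "\<dots> = inner (H ** (transpose H ** Y)) Y"
    by (rule inner_commute)
  also have "\<dots> = inner (transpose H ** Y) (transpose H ** Y)"
    by (rule inner_mm_right)
  finally show ?thesis by simp
qed

definition fF :: "real^'m^'m \<Rightarrow> real^'r^'m \<Rightarrow> real" where
  "fF W U = (1/2) * (norm (W - U ** transpose U))^2"
definition psiF :: "real^'m^'m \<Rightarrow> real^'r^'m \<Rightarrow> real" where
  "psiF W U = (3/2) * (norm U)^4 + norm W * (norm U)^2"
definition gf :: "real^'m^'m \<Rightarrow> real^'r^'m \<Rightarrow> real^'r^'m" where
  "gf W Y = - ((W - Y ** transpose Y + transpose (W - Y ** transpose Y)) ** Y)"
definition gpsi :: "real^'m^'m \<Rightarrow> real^'r^'m \<Rightarrow> real^'r^'m" where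
  "gpsi W Y = (6 * (norm Y)^2 + 2 * norm W) *\<^sub>R Y"

lemma p4: "(x::real)^4 = (x^2)^2" by (simp add: power_mult[symmetric])

lemma alg4: "3/2 * ((a::real) + 2*b + c)^2 + w*(a+2*b+c) - (3/2 * a^2 + w*a) - (6*a+2*w)*b
   = 6 * b^2 + 3/2 * c^2 + 3 * a * c + 6 * b * c + w * c"
  by (simp add: power2_eq_square algebra_simps)

lemma rempsi:
  "psiF W (Y+H) - psiF W Y - inner (gpsi W Y) H =
     6 * (inner Y H)^2 + 3/2 * (inner H H)^2 + 3 * inner Y Y * inner H H
     + 6 * inner Y H * inner H H + norm W * inner H H"
proof -
  have e: "(norm (Y+H))^2 = inner Y Y + 2 * inner Y H + inner H H"
    by (simp add: power2_norm_eq_inner inner_add_left inner_add_right inner_commute[of H Y])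
  have ny: "(norm Y)^2 = inner Y Y" by (simp add: power2_norm_eq_inner)
  have 1: "psiF W (Y+H) = 3/2 * (inner Y Y + 2 * inner Y H + inner H H)^2
       + norm W * (inner Y Y + 2 * inner Y H + inner H H)"
    unfolding psiF_def p4 e by simp
  have 2: "psiF W Y = 3/2 * (inner Y Y)^2 + norm W * inner Y Y"
    unfolding psiF_def p4 ny by simp
  have 3: "inner (gpsi W Y) H = (6 * inner Y Y + 2 * norm W) * inner Y H"
    unfolding gpsi_def ny by simp
  show ?thesis unfolding 1 2 3 by (rule alg4)
qed

lemma remf:
  fixes W :: "real^'m^'m" and Y H :: "real^'r^'m"
  defines "A \<equiv> Y ** transpose Y" and "S \<equiv> Y ** transpose H + H ** transpose Y"
    and "Q \<equiv> H ** transpose H"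
  shows "fF W (Y+H) - fF W Y - inner (gf W Y) H =
     - inner W Q + inner A Q + 1/2 * inner S S + inner S Q + 1/2 * inner Q Q"
proof -
  define E where "E = W - A"
  have xx: "(Y+H) ** transpose (Y+H) = A + S + Q"
    by (simp add: A_def S_def Q_def tr_add mm_ldistrib mm_rdistrib algebra_simps)
  have fx: "fF W (Y+H) = 1/2 * inner (E - S - Q) (E - S - Q)"
    unfolding fF_def xx E_def by (simp add: power2_norm_eq_inner algebra_simps)
  have fy: "fF W Y = 1/2 * inner E E"
    unfolding fF_def E_def A_def by (simp add: power2_norm_eq_inner)
  have t: "inner (transpose E ** Y) H = inner E (Y ** transpose H)"
  proof -
    have "inner (transpose E ** Y) H = inner (transpose E) (H ** transpose Y)"
      by (rule inner_mm_left)
    also have "\<dots> = inner E (transpose (H ** transpose Y))"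
      by (metis inner_transpose transpose_transpose)
    finally show ?thesis by (simp add: matrix_transpose_mul)
  qed
  have g: "inner (gf W Y) H = - inner E S"
    unfolding gf_def E_def[symmetric] A_def[symmetric]
    by (simp add: mm_rdistrib inner_add_left inner_diff_left inner_mm_left[of E] t S_def inner_add_right)
  show ?thesis unfolding fx fy g E_def
    by (simp add: inner_diff_left inner_diff_right inner_commute[of S W] inner_commute[of Q W]
       inner_commute[of S A] inner_commute[of Q A] inner_commute[of Q S] algebra_simps)
qed


lemma rem_bound:
  fixes W :: "real^'m^'m" and Y H :: "real^'r^'m"
  shows "\<bar>fF W (Y+H) - fF W Y - inner (gf W Y) H\<bar> \<le> psiF W (Y+H) - psiF W Y - inner (gpsi W Y) H"
proof -
  define A where "A = Y ** transpose Y"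
  define S where "S = Y ** transpose H + H ** transpose Y"
  define Q where "Q = H ** transpose H"
  define Z where "Z = Y + (1/2) *\<^sub>R H"
  define a where "a = inner Y Y"
  define b where "b = inner Y H"
  define c where "c = inner H H"
  define w where "w = norm W"
  have a0: "a \<ge> 0" and c0: "c \<ge> 0" and w0: "w \<ge> 0" by (simp_all add: a_def c_def w_def)
  have bac: "b^2 \<le> a * c"
  proof -
    have "\<bar>b\<bar> \<le> norm Y * norm H" unfolding b_def by (rule Cauchy_Schwarz_ineq2)
    hence "b^2 \<le> (norm Y * norm H)^2" by (metis abs_ge_zero power2_abs power_mono)
    thus ?thesis by (simp add: a_def c_def power_mult_distrib power2_norm_eq_inner)
  qed
  have K1: "inner S S + 2 * inner A Q \<le> 6 * a * c"
    using keyK[of Y H] by (simp add: S_def A_def Q_def a_def c_def)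
  have zs: "Z ** transpose H + H ** transpose Z = S + Q"
    by (simp add: Z_def S_def Q_def tr_add tr_scaleR mm_ldistrib mm_rdistrib mm_scaleR_l mm_scaleR_r
        algebra_simps scaleR_2[symmetric])
  have zz: "Z ** transpose Z = A + (1/2) *\<^sub>R S + (1/4) *\<^sub>R Q"
    by (simp add: Z_def S_def Q_def A_def tr_add tr_scaleR mm_ldistrib mm_rdistrib mm_scaleR_l mm_scaleR_r
        algebra_simps)
  have zn: "inner Z Z = a + b + c/4"
    by (simp add: Z_def a_def b_def c_def inner_add_left inner_add_right inner_commute[of H Y] algebra_simps)
  have K2: "inner S S + 2 * inner S Q + inner Q Q + 2 * (inner A Q + 1/2 * inner S Q + 1/4 * inner Q Q)
            \<le> 6 * (a + b + c/4) * c"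
    using keyK[of Z H] unfolding zs zz zn Q_def[symmetric] c_def[symmetric]
    by (simp add: inner_add_left inner_add_right inner_commute[of Q S] c_def algebra_simps)
  have aq: "inner A Q \<ge> 0" unfolding A_def Q_def by (rule aq_nonneg)
  have sq: "inner S S + 2 * inner S Q + inner Q Q \<ge> 0"
  proof -
    have "0 \<le> inner (S+Q) (S+Q)" by simp
    thus ?thesis by (simp add: inner_add_left inner_add_right inner_commute[of Q S])
  qed
  have wq: "\<bar>inner W Q\<bar> \<le> w * c"
  proof -
    have "\<bar>inner W Q\<bar> \<le> norm W * norm Q" by (rule Cauchy_Schwarz_ineq2)
    also have "\<dots> \<le> norm W * (norm H * norm H)"
      using norm_mult_le[of H "transpose H"] by (simp add: Q_def norm_transpose mult_left_mono)
    finally show ?thesis by (simp add: w_def c_def power2_norm_eq_inner[symmetric] power2_eq_square)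
  qed
  have R: "fF W (Y+H) - fF W Y - inner (gf W Y) H =
     - inner W Q + inner A Q + 1/2 * inner S S + inner S Q + 1/2 * inner Q Q"
    unfolding A_def S_def Q_def by (rule remf)
  have D: "psiF W (Y+H) - psiF W Y - inner (gpsi W Y) H =
     6 * b^2 + 3/2 * c^2 + 3 * (a * c) + 6 * (b * c) + w * c"
    unfolding a_def b_def c_def w_def by (simp add: rempsi)
  have pos: "0 \<le> 6 * b^2 + 3/2 * c^2 + 3 * (a * c) + 6 * (b * c)"
  proof -
    have "0 \<le> 6 * (b + c/2)^2 + 3 * a * c" using a0 c0 by simp
    thus ?thesis by (simp add: power2_eq_square algebra_simps)
  qed
  have fin: "3 * (a * c) + 2 * (b * c) + 1/2 * c^2 \<le> 6 * b^2 + 3/2 * c^2 + 3 * (a * c) + 6 * (b * c)"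
  proof -
    have "0 \<le> 6 * (b + c/3)^2 + c^2/3" by simp
    thus ?thesis by (simp add: power2_eq_square algebra_simps)
  qed
  have K1': "inner S S + 2 * inner A Q \<le> 6 * (a * c)" using K1 by simp
  have K2': "inner S S + 3 * inner S Q + 3/2 * inner Q Q + 2 * inner A Q
       \<le> 6 * (a * c) + 6 * (b * c) + 3/2 * c^2"
    using K2 by (simp add: algebra_simps power2_eq_square)
  have wq': "inner W Q \<le> w * c" "- inner W Q \<le> w * c" using wq by linarith+
  define r where "r = - inner W Q + inner A Q + 1/2 * inner S S + inner S Q + 1/2 * inner Q Q"
  define d where "d = 6 * b^2 + 3/2 * c^2 + 3 * (a * c) + 6 * (b * c)"
  have up1: "inner A Q + 1/2 * inner S S + inner S Q + 1/2 * inner Q Q \<le> 3 * (a * c) + 2 * (b * c) + 1/2 * c^2"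
    using K1' K2' by linarith
  have up: "r \<le> d + w * c" unfolding r_def d_def using up1 wq'(2) fin by linarith
  have lo: "- r \<le> d + w * c" unfolding r_def d_def using aq sq wq'(1) pos by linarith
  have "\<bar>r\<bar> \<le> d + w * c" using up lo by linarith
  thus ?thesis unfolding R D r_def d_def by simp
qed

lemma rempsi_quad:
  fixes W :: "real^'m^'m" and Y H :: "real^'r^'m"
  assumes "norm H \<le> 1"
  shows "psiF W (Y+H) - psiF W Y - inner (gpsi W Y) H
     \<le> (9 * (norm Y)^2 + 3/2 + 6 * norm Y + norm W) * (norm H)^2"
proof -
  define y where "y = norm Y"
  define n where "n = norm H"
  define b where "b = inner Y H"
  have y0: "y \<ge> 0" and n0: "n \<ge> 0" and n1: "n \<le> 1" using assms by (simp_all add: y_def n_def)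
  have bb: "\<bar>b\<bar> \<le> y * n" unfolding b_def y_def n_def by (rule Cauchy_Schwarz_ineq2)
  have b2: "b^2 \<le> (y*n)^2" using bb by (metis abs_ge_zero power2_abs power_mono)
  have nn: "n^2 \<le> 1" using n0 n1 by (simp add: power_le_one)
  have t1: "(n^2)^2 \<le> n^2" using nn n0 by (simp add: power2_eq_square mult_left_le)
  have t2: "b * n^2 \<le> y * n^2"
  proof -
    have "b * n^2 \<le> (y * n) * n^2" using bb by (simp add: mult_right_mono)
    also have "\<dots> \<le> y * n^2"
    proof -
      have "(y * n^2) * n \<le> (y * n^2) * 1" using y0 n0 n1 by (intro mult_left_mono) simp_all
      thus ?thesis by (simp add: mult_ac)
    qed
    finally show ?thesis .
  qed
  have "psiF W (Y+H) - psiF W Y - inner (gpsi W Y) H =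
     6 * b^2 + 3/2 * (n^2)^2 + 3 * y^2 * n^2 + 6 * b * n^2 + norm W * n^2"
    by (simp add: rempsi b_def y_def n_def power2_norm_eq_inner)
  also have "\<dots> \<le> 6 * (y*n)^2 + 3/2 * n^2 + 3 * y^2 * n^2 + 6 * y * n^2 + norm W * n^2"
    using b2 t1 t2 by linarith
  also have "\<dots> = (9 * y^2 + 3/2 + 6 * y + norm W) * n^2"
    by (simp add: algebra_simps power_mult_distrib)
  finally show ?thesis by (simp add: y_def n_def)
qed

lemma deriv_f:
  fixes W :: "real^'m^'m" and Y :: "real^'r^'m"
  shows "(fF W has_derivative (\<lambda>h. inner (gf W Y) h)) (at Y)"
proof (rule has_derivative_quad[where K = "9 * (norm Y)^2 + 3/2 + 6 * norm Y + norm W"])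
  show "bounded_linear (\<lambda>h. inner (gf W Y) h)" by (rule bounded_linear_inner_right)
  fix h :: "real^'r^'m" assume "norm h \<le> 1"
  thus "\<bar>fF W (Y + h) - fF W Y - inner (gf W Y) h\<bar> \<le> (9 * (norm Y)^2 + 3/2 + 6 * norm Y + norm W) * (norm h)^2"
    using rem_bound[of W Y h] rempsi_quad[of h W Y] by linarith
qed

lemma deriv_psi:
  fixes W :: "real^'m^'m" and Y :: "real^'r^'m"
  shows "(psiF W has_derivative (\<lambda>h. inner (gpsi W Y) h)) (at Y)"
proof (rule has_derivative_quad[where K = "9 * (norm Y)^2 + 3/2 + 6 * norm Y + norm W"])
  show "bounded_linear (\<lambda>h. inner (gpsi W Y) h)" by (rule bounded_linear_inner_right)
  fix h :: "real^'r^'m" assume "norm h \<le> 1"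
  thus "\<bar>psiF W (Y + h) - psiF W Y - inner (gpsi W Y) h\<bar> \<le> (9 * (norm Y)^2 + 3/2 + 6 * norm Y + norm W) * (norm h)^2"
    using rem_bound[of W Y h] rempsi_quad[of h W Y] by linarith
qed

theorem proposition1:
  fixes W :: "real^'m^'m" and L :: real
  assumes "transpose W = W"
    and "L \<ge> 1"
  shows "L_smad (\<lambda>U::real^'r^'m. (1/2) * (norm (W - U ** transpose U))^2)
                (\<lambda>U::real^'r^'m. (3/2) * (norm U)^4 + norm W * (norm U)^2)
                L UNIV"
proof -
  have ff: "(\<lambda>U::real^'r^'m. (1/2) * (norm (W - U ** transpose U))^2) = fF W"
    by (simp add: fun_eq_iff fF_def)
  have pp: "(\<lambda>U::real^'r^'m. (3/2) * (norm U)^4 + norm W * (norm U)^2) = psiF W"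
    by (simp add: fun_eq_iff psiF_def)
  show ?thesis unfolding ff pp L_smad_def bregman_def
  proof (intro conjI ballI)
    show "L > 0" using assms by simp
    fix x y :: "real^'r^'m"
    have gx: "grad (fF W) y = gf W y" by (rule grad_eq[OF deriv_f])
    have gp: "grad (psiF W) y = gpsi W y" by (rule grad_eq[OF deriv_psi])
    have x: "x = y + (x - y)" by simp
    have rb: "\<bar>fF W x - fF W y - inner (gf W y) (x - y)\<bar> \<le> psiF W x - psiF W y - inner (gpsi W y) (x - y)"
      using rem_bound[of W y "x - y"] by simp
    have d0: "0 \<le> psiF W x - psiF W y - inner (gpsi W y) (x - y)"
      using rb by linarith
    have "psiF W x - psiF W y - inner (gpsi W y) (x - y) \<le> L * (psiF W x - psiF W y - inner (gpsi W y) (x - y))"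
      using d0 assms(2) by (simp add: mult_le_cancel_right1)
    thus "\<bar>fF W x - fF W y - inner (grad (fF W) y) (x - y)\<bar> \<le> L * (psiF W x - psiF W y - inner (grad (psiF W) y) (x - y))"
      using rb gx gp by simp
  qed
qed

end
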